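(* For all integers $k\ge1$, $\theta\ge1$ and $\epsilon>0$, there exists a mechanism that answers the workload $\mathbf{R}_k$ of all one-dimensional range queries over $[k]$ with $O(\log^3\theta/\epsilon^2)$ error per query under $(\epsilon,G^\theta_k)$-Blowfish privacy.
   Context: Databases are histogram vectors $\mathbf{x}\in\mathbb{R}^k$ over $[k]=\{1,\dots,k\}$. $\mathbf{R}_k$ consists of the queries $\mathbf{q}(l,r)\mathbf{x}=\sum_{l\le i\le r}\mathbf{x}_i$ for $1\le l\le r\le k$. The policy graph $G^\theta_k$ has vertex set $[k]$ (no $\bot$) and an edge between distinct $u,v$ iff $|u-v|\le\theta$. Two databases are neighbors under $G^\theta_k$ iff they differ in the value of exactly one record, $u$ in one and $v$ in the other, with $(u,v)$ an edge. A mechanism $\mathcal{M}$ is $(\epsilon,G)$-Blowfish private if $\Pr[\mathcal{M}(\mathbf{x})\in S]\le e^\epsilon\Pr[\mathcal{M}(\mathbf{x}')\in S]$ for all output sets $S$ and all neighbors. Error per query is the data-independent total mean squared error $\max_{\mathbf{x}}\sum_{\mathbf{q}}\mathbb{E}[(\mathbf{q}\mathbf{x}-\mathcal{M}(\mathbf{q},\mathbf{x}))^2]$ divided by the number of queries. *)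

theory Defs
  imports "HOL-Probability.Probability"
begin

text \<open>Databases over [k]: histogram vectors, represented as functions nat => real
  that vanish outside {1..k}.\<close>
definition databases :: "nat \<Rightarrow> (nat \<Rightarrow> real) set" where
  "databases k = {x. \<forall>i. i \<notin> {1..k} \<longrightarrow> x i = 0}"

definition range_queries :: "nat \<Rightarrow> (nat \<times> nat) set" where
  "range_queries k = {(l, r). 1 \<le> l \<and> l \<le> r \<and> r \<le> k}"

definition range_query :: "nat \<times> nat \<Rightarrow> (nat \<Rightarrow> real) \<Rightarrow> real" where
  "range_query q x = (\<Sum>i\<in>{fst q..snd q}. x i)"

text \<open>Neighbors under the policy graph G^theta_k (vertex set [k], edge between
  distinct u, v iff |u - v| <= theta): one record changes its value from u to v.\<close>
definition blowfish_neighbors :: "nat \<Rightarrow> nat \<Rightarrow> (nat \<Rightarrow> real) \<Rightarrow> (nat \<Rightarrow> real) \<Rightarrow> bool" where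
  "blowfish_neighbors \<theta> k x x' \<longleftrightarrow> x \<in> databases k \<and>
     (\<exists>u v. u \<in> {1..k} \<and> v \<in> {1..k} \<and> u \<noteq> v \<and>
        \<bar>int u - int v\<bar> \<le> int \<theta> \<and> x' = x(u := x u - 1, v := x v + 1))"

definition output_space :: "nat \<Rightarrow> (nat \<times> nat \<Rightarrow> real) measure" where
  "output_space k = PiM (range_queries k) (\<lambda>_. borel)"

definition blowfish_private ::
  "real \<Rightarrow> nat \<Rightarrow> nat \<Rightarrow> ((nat \<Rightarrow> real) \<Rightarrow> (nat \<times> nat \<Rightarrow> real) measure) \<Rightarrow> bool" where
  "blowfish_private \<epsilon> \<theta> k M \<longleftrightarrow>
     (\<forall>x\<in>databases k. prob_space (M x) \<and> sets (M x) = sets (output_space k)) \<and>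
     (\<forall>x x' S. blowfish_neighbors \<theta> k x x' \<longrightarrow> S \<in> sets (output_space k) \<longrightarrow>
        measure (M x) S \<le> exp \<epsilon> * measure (M x') S)"

definition error_per_query ::
  "nat \<Rightarrow> ((nat \<Rightarrow> real) \<Rightarrow> (nat \<times> nat \<Rightarrow> real) measure) \<Rightarrow> ennreal" where
  "error_per_query k M =
     (SUP x\<in>databases k. \<Sum>q\<in>range_queries k.
        \<integral>\<^sup>+ y. ennreal ((range_query q x - y q)\<^sup>2) \<partial>(M x))
     / of_nat (card (range_queries k))"

end

theory Submission
  imports Defs
begin


definition phi :: "bool \<times> nat \<Rightarrow> int" where
  "phi p = (if fst p then int (snd p) else - int (snd p) - 1)"

definition Gn :: "real \<Rightarrow> int pmf" where
  "Gn s = map_pmf phi (pair_pmf (bernoulli_pmf (1/(1+exp(-s)))) (geometric_pmf (1 - exp(-s))))"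

lemma inj_phi: "inj phi"
  unfolding inj_def phi_def by auto

lemma alg1: "(a::real) > 0 \<Longrightarrow> (1 - 1/(1+a)) * (w * (1 - a)) = (1 - a)/(1+a) * (a * w)"
proof -
  assume "a > 0"
  then have d: "1 + a \<noteq> 0" by simp
  have "1 - 1/(1+a) = a/(1+a)" using d by (simp add: field_simps)
  then show ?thesis by simp
qed

lemma pmf_Gn:
  assumes s: "s > 0"
  shows "pmf (Gn s) z = (1 - exp(-s))/(1+exp(-s)) * exp(-s * \<bar>real_of_int z\<bar>)"
proof -
  have a0: "0 < exp(-s)" by simp
  have a1: "exp(-s) < 1" using s by simp
  have p1: "0 \<le> 1/(1+exp(-s))" "1/(1+exp(-s)) \<le> 1" proof -
    have q: "0 < 1 + exp(-s)" using a0 by linarith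
    show "0 \<le> 1/(1+exp(-s))" using q by (simp only: zero_le_divide_1_iff less_imp_le)
    have q2: "1 \<le> 1 + exp(-s)" using a0 by linarith
    show "1/(1+exp(-s)) \<le> 1" using divide_le_eq_1_pos[OF q, of 1] q2 by blast
  qed
  have gp: "0 < 1 - exp(-s)" "1 - exp(-s) \<le> 1" using a0 a1 by auto
  have epow: "exp(-s) ^ n = exp(-s * real n)" for n
    by (simp add: exp_of_nat_mult[symmetric] mult.commute)
  show ?thesis
  proof (cases "z \<ge> 0")
    case True
    then have zz: "z = phi (True, nat z)" by (simp add: phi_def)
    have "pmf (Gn s) z = pmf (pair_pmf (bernoulli_pmf (1/(1+exp(-s)))) (geometric_pmf (1 - exp(-s)))) (True, nat z)"
      unfolding Gn_def by (subst zz, rule pmf_map_inj'[OF inj_phi])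
    also have "\<dots> = 1/(1+exp(-s)) * (exp(-s) ^ nat z * (1 - exp(-s)))"
      unfolding pmf_pair pmf_bernoulli_True[OF p1] using gp by simp
    also have "\<dots> = (1 - exp(-s))/(1+exp(-s)) * exp(-s * \<bar>real_of_int z\<bar>)"
      using True by (simp add: epow)
    finally show ?thesis .
  next
    case False
    then have zz: "z = phi (False, nat (-z-1))" by (simp add: phi_def)
    have "pmf (Gn s) z = pmf (pair_pmf (bernoulli_pmf (1/(1+exp(-s)))) (geometric_pmf (1 - exp(-s)))) (False, nat (-z-1))"
      unfolding Gn_def by (subst zz, rule pmf_map_inj'[OF inj_phi])
    also have "\<dots> = (1 - 1/(1+exp(-s))) * (exp(-s) ^ nat (-z-1) * (1 - exp(-s)))"
      unfolding pmf_pair pmf_bernoulli_False[OF p1] using gp by simp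
    also have "\<dots> = (1 - exp(-s))/(1+exp(-s)) * (exp(-s) * exp(-s) ^ nat (-z-1))"
      by (rule alg1) (use a0 in simp)
    also have "exp(-s) * exp(-s) ^ nat (-z-1) = exp(-s) ^ nat (-z)"
    proof -
      have "nat (-z) = Suc (nat (-z-1))" using False by simp
      then show ?thesis by simp
    qed
    also have "\<dots> = exp(-s * \<bar>real_of_int z\<bar>)"
      using False by (simp add: epow)
    finally show ?thesis .
  qed
qed

lemma key_exp:
  fixes s t :: real
  assumes s: "s > 0" and t: "t \<ge> 0"
  shows "t^2 * exp(-s*t) \<le> 16/s^2 * exp(-(s/2)*t)"
proof -
  have "1 + s*t/4 \<le> exp(s*t/4::real)" by (rule exp_ge_add_one_self)
  then have "s*t/4 \<le> exp(s*t/4)" by linarith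
  then have "t \<le> 4/s * exp(s*t/4)" using s by (simp add: field_simps)
  then have "t * exp(-(s*t/4)) \<le> 4/s" using s by (simp add: exp_minus field_simps)
  moreover have "0 \<le> t * exp(-(s*t/4))" using t by simp
  ultimately have "(t * exp(-(s*t/4)))^2 \<le> (4/s)^2" by (rule power_mono)
  then have "(t * exp(-(s*t/4)))^2 * exp(-(s/2)*t) \<le> (4/s)^2 * exp(-(s/2)*t)"
    by (rule mult_right_mono) simp
  also have "(t * exp(-(s*t/4)))^2 * exp(-(s/2)*t) = t^2 * exp(-s*t)"
    by (simp add: power2_eq_square exp_add[symmetric] field_simps)
  finally show ?thesis by (simp add: power_divide)
qed

lemma sum_bound:
  assumes s: "s > 0" and g: "\<And>n. 0 \<le> g n" "\<And>n. g n \<le> 16/s^2 * (1 - exp(-s)) * exp(-(s/2)) ^ n"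
  shows "(\<Sum>n. ennreal (g n)) \<le> ennreal (32/s^2)"
proof -
  define b where "b = exp(-(s/2))"
  have b0: "0 < b" "b < 1" using s by (auto simp: b_def)
  have e1: "0 \<le> 1 - exp(-s)" using s by simp
  have ab: "exp(-s) = b^2" unfolding b_def by (simp add: exp_add[symmetric] power2_eq_square)
  have "(\<Sum>n. ennreal (g n)) \<le> (\<Sum>n. ennreal (16/s^2 * (1 - exp(-s)) * b ^ n))"
    by (intro suminf_le ennreal_leI g(2)[unfolded b_def[symmetric]]) auto
  also have "\<dots> = ennreal (16/s^2 * (1 - exp(-s)) * (1 / (1 - b)))"
    using b0 s e1 by (intro suminf_ennreal_eq sums_mult geometric_sums) auto
  also have "16/s^2 * (1 - exp(-s)) * (1 / (1 - b)) = 16/s^2 * (1 + b)"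
  proof -
    have "(1 - b^2) * (1 / (1 - b)) = 1 + b" using b0 by (simp add: power2_eq_square field_simps)
    then show ?thesis unfolding ab by (metis mult.assoc)
  qed
  also have "\<dots> \<le> 32/s^2" using b0 s by (simp add: field_simps)
  finally show ?thesis by (simp add: ennreal_leI)
qed

lemma geo_int:
  assumes s: "s > 0" and h: "\<And>n. 0 \<le> h n"
  shows "(\<integral>\<^sup>+n. ennreal (h n) \<partial>geometric_pmf (1-exp(-s))) = (\<Sum>n. ennreal (exp(-s)^n*(1-exp(-s)) * h n))"
proof -
  have gp: "0 < 1 - exp(-s)" "1 - exp(-s) \<le> 1" using s by auto
  show ?thesis
    unfolding nn_integral_measure_pmf nn_integral_count_space_nat pmf_geometric[OF gp]
    using gp h by (simp add: ennreal_mult'')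
qed

lemma Gn_moment:
  assumes s: "s > 0"
  shows "(\<integral>\<^sup>+z. ennreal ((real_of_int z)^2) \<partial>Gn s) \<le> ennreal (64/s^2)"
proof -
  define a where "a = exp(-s)"
  define pT where "pT = 1/(1+a)"
  have a0: "0 < a" "a < 1" using s by (auto simp: a_def)
  have p1: "0 \<le> pT" "pT \<le> 1" using a0 by (auto simp: pT_def divide_le_eq)
  have p2: "1 - pT \<le> a" using a0 unfolding pT_def by (simp add: field_simps)
  have eps: "exp(-s) ^ n = exp(-s * real n)" for n
    by (simp add: exp_of_nat_mult[symmetric] mult.commute)
  have eps2: "exp(-(s/2)) ^ n = exp(-(s/2) * real n)" for n
    by (simp add: exp_of_nat_mult[symmetric] mult.commute)
  have I: "(\<integral>\<^sup>+z. ennreal ((real_of_int z)^2) \<partial>Gn s)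
      = (\<integral>\<^sup>+n. ennreal ((real n)^2) \<partial>geometric_pmf (1-a)) * ennreal pT
        + (\<integral>\<^sup>+n. ennreal ((real n + 1)^2) \<partial>geometric_pmf (1-a)) * ennreal (1 - pT)"
  proof -
    have "(\<integral>\<^sup>+z. ennreal ((real_of_int z)^2) \<partial>Gn s)
       = (\<integral>\<^sup>+b. \<integral>\<^sup>+n. ennreal ((real_of_int (phi (b,n)))^2) \<partial>geometric_pmf (1-a) \<partial>bernoulli_pmf pT)"
      unfolding Gn_def nn_integral_map_pmf nn_integral_pair_pmf' a_def pT_def ..
    also have "\<dots> = (\<integral>\<^sup>+n. ennreal ((real n)^2) \<partial>geometric_pmf (1-a)) * ennreal pT
        + (\<integral>\<^sup>+n. ennreal ((real n + 1)^2) \<partial>geometric_pmf (1-a)) * ennreal (1 - pT)"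
    proof -
      have phT: "real_of_int (phi (True, n)) = real n" for n by (simp add: phi_def)
      have phF: "(real_of_int (phi (False, n)))^2 = (real n + 1)^2" for n by (simp add: phi_def power2_eq_square algebra_simps)
      show ?thesis
        by (subst nn_integral_bernoulli_pmf[OF p1]) (simp_all only: phT phF zero_le)
    qed
    finally show ?thesis .
  qed
  have E1: "(\<integral>\<^sup>+n. ennreal ((real n)^2) \<partial>geometric_pmf (1-a)) \<le> ennreal (32/s^2)"
    unfolding a_def geo_int[OF s, of "\<lambda>n. (real n)^2", simplified]
  proof (rule sum_bound[OF s])
    fix n
    show "0 \<le> exp (- s) ^ n * (1 - exp (- s)) * (real n)^2" using s by simp
    have "(real n)^2 * exp(-s * real n) \<le> 16/s^2 * exp(-(s/2) * real n)"
      by (rule key_exp[OF s]) simp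
    then have "(1 - exp(-s)) * ((real n)^2 * exp(-s * real n)) \<le> (1 - exp(-s)) * (16/s^2 * exp(-(s/2) * real n))"
      by (rule mult_left_mono) (use s in simp)
    then show "exp (- s) ^ n * (1 - exp (- s)) * (real n)^2 \<le> 16 / s^2 * (1 - exp (- s)) * exp (- (s / 2)) ^ n"
      unfolding eps eps2 by (simp add: algebra_simps)
  qed
  have E2: "(\<integral>\<^sup>+n. ennreal ((real n + 1)^2) \<partial>geometric_pmf (1-a)) * ennreal a \<le> ennreal (32/s^2)"
  proof -
    have "(\<integral>\<^sup>+n. ennreal ((real n + 1)^2) \<partial>geometric_pmf (1-a)) * ennreal a
        = (\<Sum>n. ennreal (exp(-s)^n*(1-exp(-s)) * (real n + 1)^2)) * ennreal a"
      unfolding a_def by (subst geo_int[OF s]) auto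
    also have "\<dots> = (\<Sum>n. ennreal (exp(-s)^n*(1-exp(-s)) * (real n + 1)^2 * a))"
      using a0 s by (simp add: ennreal_mult'' ennreal_suminf_multc)
    also have "\<dots> \<le> ennreal (32/s^2)"
    proof (rule sum_bound[OF s])
      fix n
      show "0 \<le> exp (- s) ^ n * (1 - exp (- s)) * (real n + 1)^2 * a" using s a0 by simp
      have "(real n + 1)^2 * exp(-s * (real n + 1)) \<le> 16/s^2 * exp(-(s/2) * (real n + 1))"
        by (rule key_exp[OF s]) simp
      also have "\<dots> \<le> 16/s^2 * exp(-(s/2) * real n)"
        using s by (intro mult_left_mono) (auto simp: algebra_simps)
      finally have "(1 - exp(-s)) * ((real n + 1)^2 * exp(-s * (real n + 1))) \<le> (1 - exp(-s)) * (16/s^2 * exp(-(s/2) * real n))"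
        by (rule mult_left_mono) (use s in simp)
      moreover have "exp(-s * (real n + 1)) = exp(-s)^n * a"
        unfolding eps a_def by (simp add: exp_add[symmetric] algebra_simps)
      ultimately show "exp (- s) ^ n * (1 - exp (- s)) * (real n + 1)^2 * a \<le> 16 / s^2 * (1 - exp (- s)) * exp (- (s / 2)) ^ n"
        unfolding eps2 by (simp add: algebra_simps)
    qed
    finally show ?thesis .
  qed
  have "(\<integral>\<^sup>+n. ennreal ((real n)^2) \<partial>geometric_pmf (1-a)) * ennreal pT \<le> ennreal (32/s^2)"
  proof -
    have "(\<integral>\<^sup>+n. ennreal ((real n)^2) \<partial>geometric_pmf (1-a)) * ennreal pT \<le> (\<integral>\<^sup>+n. ennreal ((real n)^2) \<partial>geometric_pmf (1-a)) * 1"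
      using p1 by (intro mult_left_mono) auto
    then show ?thesis using E1 by simp
  qed
  moreover have "(\<integral>\<^sup>+n. ennreal ((real n + 1)^2) \<partial>geometric_pmf (1-a)) * ennreal (1 - pT) \<le> ennreal (32/s^2)"
  proof -
    have "(\<integral>\<^sup>+n. ennreal ((real n + 1)^2) \<partial>geometric_pmf (1-a)) * ennreal (1 - pT) \<le> (\<integral>\<^sup>+n. ennreal ((real n + 1)^2) \<partial>geometric_pmf (1-a)) * ennreal a"
      using p2 by (intro mult_left_mono ennreal_leI) auto
    then show ?thesis using E2 by simp
  qed
  ultimately have "(\<integral>\<^sup>+z. ennreal ((real_of_int z)^2) \<partial>Gn s) \<le> ennreal (32/s^2) + ennreal (32/s^2)"
    unfolding I by (rule add_mono)
  also have "\<dots> = ennreal (64/s^2)" by (simp add: ennreal_plus[symmetric] del: ennreal_plus)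
  finally show ?thesis .
qed



definition Jset :: "nat \<Rightarrow> nat \<Rightarrow> nat \<Rightarrow> nat set" where
  "Jset m h a = (if h < m then {(a div 2)*2^(h+1) <.. a*2^h} else {0 <.. a*2^m})"

definition strat :: "nat \<Rightarrow> nat \<Rightarrow> nat \<Rightarrow> (nat \<Rightarrow> real) \<Rightarrow> real" where
  "strat m h a x = (\<Sum>i\<in>Jset m h a. x i)"

definition Fp :: "(nat \<Rightarrow> real) \<Rightarrow> nat \<Rightarrow> real" where
  "Fp x t = (\<Sum>i\<in>{0<..t}. x i)"

lemma Fp_diff: "lo \<le> hi \<Longrightarrow> (\<Sum>i\<in>{lo<..hi}. x i) = Fp x hi - Fp x lo"
proof -
  assume "lo \<le> hi"
  then have "{0<..hi} = {0<..lo} \<union> {lo<..hi}" by auto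
  moreover have "{0<..lo} \<inter> {lo<..hi} = {}" by auto
  ultimately have "Fp x hi = Fp x lo + (\<Sum>i\<in>{lo<..hi}. x i)"
    unfolding Fp_def by (simp add: sum.union_disjoint)
  then show ?thesis by simp
qed

lemma div_le_aux: "(j div 2^(Suc h)) * 2^(Suc h) \<le> (j div 2^h) * (2::nat)^h"
proof -
  have "j div 2^(Suc h) = (j div 2^h) div 2" by (metis div_mult2_eq power_Suc2)
  then have "(j div 2^(Suc h)) * 2^(Suc h) = ((j div 2^h) div 2 * 2) * 2^h" by simp
  also have "\<dots> \<le> (j div 2^h) * 2^h" by simp
  finally show ?thesis .
qed

lemma strat_tele: "(\<Sum>h\<le>m. strat m h (j div 2^h) x) = Fp x j"
proof -
  define f where "f h = Fp x ((j div 2^h) * 2^h)" for h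
  have lt: "strat m h (j div 2^h) x = f h - f (Suc h)" if "h < m" for h
  proof -
    have e: "(j div 2^h) div 2 * 2^(h+1) = (j div 2^(Suc h)) * 2^(Suc h)"
      by (metis div_mult2_eq power_Suc2 Suc_eq_plus1)
    have "strat m h (j div 2^h) x = (\<Sum>i\<in>{(j div 2^(Suc h))*2^(Suc h)<..(j div 2^h)*2^h}. x i)"
      using that unfolding strat_def Jset_def e by simp
    also have "\<dots> = f h - f (Suc h)" unfolding f_def by (rule Fp_diff[OF div_le_aux])
    finally show ?thesis .

  qed
  have "(\<Sum>h\<le>m. strat m h (j div 2^h) x) = (\<Sum>h<m. strat m h (j div 2^h) x) + strat m m (j div 2^m) x"
    by (simp add: lessThan_Suc_atMost[symmetric])
  also have "(\<Sum>h<m. strat m h (j div 2^h) x) = (\<Sum>h<m. f h - f (Suc h))"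
    by (rule sum.cong) (auto simp: lt)
  also have "\<dots> = f 0 - f m" by (rule sum_lessThan_telescope')
  also have "strat m m (j div 2^m) x = f m"
    unfolding strat_def Jset_def f_def Fp_def by simp
  finally show ?thesis by (simp add: f_def)
qed

definition Iset :: "nat \<Rightarrow> nat \<Rightarrow> (nat \<times> nat) set" where
  "Iset m k = {0..m} \<times> {0..k}"

definition Pn :: "nat \<Rightarrow> nat \<Rightarrow> real \<Rightarrow> (nat \<times> nat \<Rightarrow> int) pmf" where
  "Pn m k s = Pi_pmf (Iset m k) 0 (\<lambda>_. Gn s)"

definition phat :: "nat \<Rightarrow> (nat \<Rightarrow> real) \<Rightarrow> (nat \<times> nat \<Rightarrow> int) \<Rightarrow> nat \<Rightarrow> real" where
  "phat m x z j = (\<Sum>h\<le>m. strat m h (j div 2^h) x + real_of_int (z (h, j div 2^h)))"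

definition est :: "nat \<Rightarrow> (nat \<Rightarrow> real) \<Rightarrow> (nat \<times> nat \<Rightarrow> int) \<Rightarrow> nat \<times> nat \<Rightarrow> real" where
  "est m x z q = phat m x z (snd q) - phat m x z (fst q - 1)"

lemma phat_eq: "phat m x z j = Fp x j + (\<Sum>h\<le>m. real_of_int (z (h, j div 2^h)))"
  unfolding phat_def sum.distrib strat_tele ..

lemma est_err:
  assumes "1 \<le> l" "l \<le> r"
  shows "est m x z (l,r) - range_query (l,r) x =
    (\<Sum>h\<le>m. real_of_int (z (h, r div 2^h)) - real_of_int (z (h, (l-1) div 2^h)))"
proof -
  have "{l..r} = {l-1<..r}" using assms by auto
  then have "range_query (l,r) x = Fp x r - Fp x (l-1)"
    unfolding range_query_def using assms by (simp add: Fp_diff)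
  then show ?thesis unfolding est_def phat_eq by (simp add: sum_subtractf)
qed

definition ind :: "nat \<Rightarrow> nat set \<Rightarrow> int" where
  "ind w J = (if w \<in> J then 1 else 0)"

definition dd :: "nat \<Rightarrow> nat \<Rightarrow> nat \<Rightarrow> nat \<Rightarrow> nat \<times> nat \<Rightarrow> int" where
  "dd m k u v i = (if i \<in> Iset m k then ind v (Jset m (fst i) (snd i)) - ind u (Jset m (fst i) (snd i)) else 0)"

lemma finite_Jset: "finite (Jset m h a)"
  unfolding Jset_def by auto

lemma strat_nb:
  assumes "u \<noteq> v"
  shows "strat m h a (x(u := x u - 1, v := x v + 1)) = strat m h a x + real_of_int (ind v (Jset m h a) - ind u (Jset m h a))"
proof -
  have "x(u := x u - 1, v := x v + 1) = (\<lambda>i. x i + (if i = v then 1 else 0) - (if i = u then 1 else 0))"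
    using assms by auto
  then show ?thesis
    unfolding strat_def ind_def using finite_Jset[of m h a]
    by (simp add: sum.distrib sum_subtractf)
qed

lemma est_nb:
  assumes "u \<noteq> v" "q \<in> range_queries k"
  shows "est m (x(u := x u - 1, v := x v + 1)) z q = est m x (\<lambda>i. z i + dd m k u v i) q"
proof -
  have ph: "phat m (x(u := x u - 1, v := x v + 1)) z j = phat m x (\<lambda>i. z i + dd m k u v i) j" if "j \<le> k" for j
    unfolding phat_def
  proof (rule sum.cong[OF refl])
    fix h assume h: "h \<in> {..m}"
    have "j div 2^h \<le> k" using that by (meson div_le_dividend le_trans)
    then have "(h, j div 2^h) \<in> Iset m k" using h by (auto simp: Iset_def)
    then show "strat m h (j div 2^h) (x(u := x u - 1, v := x v + 1)) + real_of_int (z (h, j div 2^h)) =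
       strat m h (j div 2^h) x + real_of_int (z (h, j div 2^h) + dd m k u v (h, j div 2^h))"
      unfolding strat_nb[OF assms(1)] dd_def by simp
  qed
  obtain l r where q: "q = (l,r)" "1 \<le> l" "l \<le> r" "r \<le> k"
    using assms(2) unfolding range_queries_def by auto
  show ?thesis unfolding est_def q using q by (simp add: ph)
qed



lemma sum_unique_le1:
  assumes "finite A" "\<And>a a'. a \<in> A \<Longrightarrow> a' \<in> A \<Longrightarrow> P a \<Longrightarrow> P a' \<Longrightarrow> a = a'"
  shows "(\<Sum>a\<in>A. if P a then 1 else 0::real) \<le> 1"
proof -
  have "(\<Sum>a\<in>A. if P a then 1 else 0::real) = real (card {a\<in>A. P a})"
    using assms(1) by (simp add: sum.If_cases Int_def conj_commute)
  moreover have "card {a\<in>A. P a} \<le> 1"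
    using assms by (auto simp: card_le_Suc0_iff_eq)
  ultimately show ?thesis by simp
qed

lemma Jset_low:
  assumes "h < m" "w \<in> Jset m h a"
  shows "a * 2^h < w + 2^h \<and> w \<le> a * 2^h"
proof -
  have "a * 2^h \<le> (a div 2) * 2^(h+1) + 2^h"
  proof -
    have "a \<le> (a div 2) * 2 + 1" by linarith
    then have "a * 2^h \<le> ((a div 2) * 2 + 1) * 2^h" by (rule mult_right_mono) simp
    then show ?thesis by (simp add: algebra_simps)
  qed
  then show ?thesis using assms unfolding Jset_def by auto
qed

lemma Jset_low_unique:
  assumes "h < m" "w \<in> Jset m h a" "w \<in> Jset m h a'"
  shows "a = a'"
proof -
  have 1: "a * 2^h < w + 2^h" "w \<le> a * 2^h" using Jset_low[OF assms(1,2)] by auto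
  have 2: "a' * 2^h < w + 2^h" "w \<le> a' * 2^h" using Jset_low[OF assms(1,3)] by auto
  have "a * 2^h < (a' + 1) * 2^h" using 1 2 by (simp add: algebra_simps)
  then have "a < a' + 1" by (rule mult_less_cancel2[THEN iffD1, THEN conjunct2])
  moreover have "a' * 2^h < (a + 1) * 2^h" using 1 2 by (simp add: algebra_simps)
  then have "a' < a + 1" by (rule mult_less_cancel2[THEN iffD1, THEN conjunct2])
  ultimately show ?thesis by simp
qed

lemma level_low:
  assumes "h < m"
  shows "(\<Sum>a\<in>{0..k}. real_of_int \<bar>ind v (Jset m h a) - ind u (Jset m h a)\<bar>) \<le> 2"
proof -
  have "(\<Sum>a\<in>{0..k}. real_of_int \<bar>ind v (Jset m h a) - ind u (Jset m h a)\<bar>)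
     \<le> (\<Sum>a\<in>{0..k}. (if v \<in> Jset m h a then 1 else 0) + (if u \<in> Jset m h a then 1 else 0))"
    by (rule sum_mono) (auto simp: ind_def)
  also have "\<dots> = (\<Sum>a\<in>{0..k}. if v \<in> Jset m h a then 1 else 0) + (\<Sum>a\<in>{0..k}. if u \<in> Jset m h a then 1 else 0)"
    by (rule sum.distrib)
  also have "\<dots> \<le> 1 + 1"
    by (intro add_mono sum_unique_le1) (auto intro: Jset_low_unique[OF assms])
  finally show ?thesis by simp
qed

lemma level_top:
  assumes "1 \<le> u" "1 \<le> v" "\<bar>int u - int v\<bar> \<le> int \<theta>" "\<theta> < 2^m"
  shows "(\<Sum>a\<in>{0..k}. real_of_int \<bar>ind v (Jset m m a) - ind u (Jset m m a)\<bar>) \<le> 2"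
proof -
  define Q where "Q a = ((u \<le> a*2^m \<and> a*2^m < v) \<or> (v \<le> a*2^m \<and> a*2^m < u))" for a
  have "(\<Sum>a\<in>{0..k}. real_of_int \<bar>ind v (Jset m m a) - ind u (Jset m m a)\<bar>)
     = (\<Sum>a\<in>{0..k}. if Q a then 1 else 0)"
    by (rule sum.cong) (use assms in \<open>auto simp: ind_def Jset_def Q_def\<close>)
  also have "\<dots> \<le> 1"
  proof (rule sum_unique_le1)
    fix a a' assume "Q a" "Q a'"
    have vu: "v \<le> u + \<theta>" "u \<le> v + \<theta>" using assms(3) by linarith+
    have 1: "a * 2^m < (a' + 1) * 2^m" "a' * 2^m < (a + 1) * 2^m"
      using \<open>Q a\<close> \<open>Q a'\<close> vu assms(4) unfolding Q_def by (auto simp: algebra_simps)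
    have "a < a' + 1" using 1(1) by (rule mult_less_cancel2[THEN iffD1, THEN conjunct2])
    moreover have "a' < a + 1" using 1(2) by (rule mult_less_cancel2[THEN iffD1, THEN conjunct2])
    ultimately show "a = a'" by simp
  qed simp
  finally show ?thesis by simp
qed

lemma sens:
  assumes "1 \<le> u" "1 \<le> v" "\<bar>int u - int v\<bar> \<le> int \<theta>" "\<theta> < 2^m"
  shows "(\<Sum>i\<in>Iset m k. real_of_int \<bar>dd m k u v i\<bar>) \<le> 2 * (real m + 1)"
proof -
  have "(\<Sum>i\<in>Iset m k. real_of_int \<bar>dd m k u v i\<bar>) =
     (\<Sum>h\<in>{0..m}. \<Sum>a\<in>{0..k}. real_of_int \<bar>ind v (Jset m h a) - ind u (Jset m h a)\<bar>)"
    unfolding Iset_def sum.cartesian_product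
    by (rule sum.cong) (auto simp: dd_def Iset_def)
  also have "\<dots> \<le> (\<Sum>h\<in>{0..m}. 2)"
  proof (rule sum_mono)
    fix h assume "h \<in> {0..m}"
    then show "(\<Sum>a\<in>{0..k}. real_of_int \<bar>ind v (Jset m h a) - ind u (Jset m h a)\<bar>) \<le> 2"
      using level_low[of h m] level_top[OF assms] by (cases "h < m") auto
  qed
  finally show ?thesis by simp
qed



lemma finite_Iset: "finite (Iset m k)" unfolding Iset_def by simp

lemma Gn_coord:
  assumes s: "s > 0"
  shows "pmf (Gn s) w \<le> exp (s * \<bar>real_of_int d\<bar>) * pmf (Gn s) (w - d)"
proof -
  have c: "0 \<le> (1 - exp(-s))/(1+exp(-s))"
  proof -
    have "exp(-s) < 1" using s by simp
    then have "0 \<le> 1 - exp(-s)" by simp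
    moreover have "0 < 1 + exp(-s)" by (simp add: add_pos_pos)
    ultimately show ?thesis by (rule divide_nonneg_pos)
  qed
  have t: "-s * \<bar>real_of_int w\<bar> \<le> s * \<bar>real_of_int d\<bar> + -s * \<bar>real_of_int (w - d)\<bar>"
  proof -
    have "\<bar>real_of_int (w - d)\<bar> \<le> \<bar>real_of_int w\<bar> + \<bar>real_of_int d\<bar>" by simp
    then have "s * \<bar>real_of_int (w - d)\<bar> \<le> s * (\<bar>real_of_int w\<bar> + \<bar>real_of_int d\<bar>)"
      using s by (intro mult_left_mono) auto
    then show ?thesis by (simp add: algebra_simps)
  qed
  have "exp(-s * \<bar>real_of_int w\<bar>) \<le> exp (s * \<bar>real_of_int d\<bar>) * exp(-s * \<bar>real_of_int (w - d)\<bar>)"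
    using t by (simp add: exp_add[symmetric])
  then have "(1 - exp(-s))/(1+exp(-s)) * exp(-s * \<bar>real_of_int w\<bar>) \<le> (1 - exp(-s))/(1+exp(-s)) * (exp (s * \<bar>real_of_int d\<bar>) * exp(-s * \<bar>real_of_int (w - d)\<bar>))"
    by (rule mult_left_mono[OF _ c])
  then show ?thesis unfolding pmf_Gn[OF s] by (simp add: algebra_simps)
qed

lemma pmf_Pn_shift:
  assumes s: "s > 0" and d: "\<And>i. i \<notin> Iset m k \<Longrightarrow> d i = 0"
    and sb: "s * (\<Sum>i\<in>Iset m k. real_of_int \<bar>d i\<bar>) \<le> \<epsilon>"
  shows "pmf (Pn m k s) w \<le> exp \<epsilon> * pmf (Pn m k s) (\<lambda>i. w i - d i)"
proof (cases "\<forall>i. i \<notin> Iset m k \<longrightarrow> w i = 0")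
  case True
  then have T2: "\<forall>i. i \<notin> Iset m k \<longrightarrow> w i - d i = 0" using d by simp
  have "(\<Prod>i\<in>Iset m k. pmf (Gn s) (w i)) \<le> (\<Prod>i\<in>Iset m k. exp (s * \<bar>real_of_int (d i)\<bar>) * pmf (Gn s) (w i - d i))"
    by (intro prod_mono conjI pmf_nonneg Gn_coord[OF s])
  also have "\<dots> = exp (s * (\<Sum>i\<in>Iset m k. real_of_int \<bar>d i\<bar>)) * (\<Prod>i\<in>Iset m k. pmf (Gn s) (w i - d i))"
    using finite_Iset by (simp add: prod.distrib exp_sum sum_distrib_left)
  also have "\<dots> \<le> exp \<epsilon> * (\<Prod>i\<in>Iset m k. pmf (Gn s) (w i - d i))"
    using sb by (intro mult_right_mono prod_nonneg) auto
  finally show ?thesis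
    unfolding Pn_def pmf_Pi[OF finite_Iset] using True T2 by simp
next
  case False
  then have "pmf (Pn m k s) w = 0" unfolding Pn_def pmf_Pi[OF finite_Iset] by auto
  then show ?thesis by simp
qed

lemma measure_le_pmf:
  fixes p q :: "'a pmf"
  assumes "\<And>w. pmf p w \<le> c * pmf q w" "0 \<le> c"
  shows "measure p A \<le> c * measure q A"
proof -
  have e: "emeasure (measure_pmf r) A = (\<integral>\<^sup>+ w. ennreal (pmf r w) * indicator A w \<partial>count_space UNIV)" for r :: "'a pmf"
    by (subst nn_integral_measure_pmf[symmetric]) simp
  have "emeasure (measure_pmf p) A \<le> (\<integral>\<^sup>+ w. ennreal c * (ennreal (pmf q w) * indicator A w) \<partial>count_space UNIV)"
    unfolding e
    by (intro nn_integral_mono) (use assms in \<open>auto simp: indicator_def ennreal_mult[symmetric] intro!: ennreal_leI\<close>)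
  also have "\<dots> = ennreal c * emeasure (measure_pmf q) A"
    unfolding e by (rule nn_integral_cmult) simp
  finally have "emeasure (measure_pmf p) A \<le> ennreal c * emeasure (measure_pmf q) A" .
  then show ?thesis
    using assms(2) by (simp add: measure_pmf.emeasure_eq_measure ennreal_mult[symmetric])
qed

definition outf :: "nat \<Rightarrow> nat \<Rightarrow> (nat \<Rightarrow> real) \<Rightarrow> (nat \<times> nat \<Rightarrow> int) \<Rightarrow> (nat \<times> nat \<Rightarrow> real)" where
  "outf m k x z = restrict (\<lambda>q. est m x z q) (range_queries k)"

definition Mech :: "nat \<Rightarrow> nat \<Rightarrow> real \<Rightarrow> (nat \<Rightarrow> real) \<Rightarrow> (nat \<times> nat \<Rightarrow> real) measure" where
  "Mech m k s x = distr (measure_pmf (Pn m k s)) (output_space k) (outf m k x)"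

lemma outf_meas: "outf m k x \<in> measurable (measure_pmf (Pn m k s)) (output_space k)"
  unfolding outf_def output_space_def by (auto simp: space_PiM)

lemma Mech_prob: "prob_space (Mech m k s x) \<and> sets (Mech m k s x) = sets (output_space k)"
  unfolding Mech_def using outf_meas
  by (auto intro: measure_pmf.prob_space_distr)

lemma Mech_measure: "S \<in> sets (output_space k) \<Longrightarrow> measure (Mech m k s x) S = measure (measure_pmf (Pn m k s)) (outf m k x -` S)"
  unfolding Mech_def by (subst measure_distr[OF outf_meas]) auto




lemma outf_shift:
  assumes "u \<noteq> v"
  shows "outf m k (x(u := x u - 1, v := x v + 1)) = (\<lambda>z. outf m k x (\<lambda>i. z i + dd m k u v i))"
  unfolding outf_def restrict_def
  by (intro ext) (simp add: est_nb[OF assms])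

lemma privacy:
  assumes s: "s > 0" and th: "\<theta> < 2^m" and eps: "s * (2 * (real m + 1)) \<le> \<epsilon>"
  shows "blowfish_private \<epsilon> \<theta> k (Mech m k s)"
  unfolding blowfish_private_def
proof (intro conjI allI impI ballI)
  fix x assume "x \<in> databases k"
  show "prob_space (Mech m k s x)" "sets (Mech m k s x) = sets (output_space k)" using Mech_prob by auto
next
  fix x x' S assume nb: "blowfish_neighbors \<theta> k x x'" and S: "S \<in> sets (output_space k)"
  then obtain u v where uv: "u \<in> {1..k}" "v \<in> {1..k}" "u \<noteq> v" "\<bar>int u - int v\<bar> \<le> int \<theta>"
     and x': "x' = x(u := x u - 1, v := x v + 1)"
    unfolding blowfish_neighbors_def by blast
  define d where "d = dd m k u v"
  define sh where "sh = (\<lambda>(z::nat\<times>nat\<Rightarrow>int) i. z i + d i)"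
  have inj: "inj sh" unfolding sh_def inj_def by (auto simp: fun_eq_iff)
  have d0: "\<And>i. i \<notin> Iset m k \<Longrightarrow> d i = 0" unfolding d_def dd_def by simp
  have sb: "s * (\<Sum>i\<in>Iset m k. real_of_int \<bar>d i\<bar>) \<le> \<epsilon>"
  proof -
    have "(\<Sum>i\<in>Iset m k. real_of_int \<bar>d i\<bar>) \<le> 2 * (real m + 1)"
      unfolding d_def by (rule sens) (use uv th in auto)
    then have "s * (\<Sum>i\<in>Iset m k. real_of_int \<bar>d i\<bar>) \<le> s * (2 * (real m + 1))"
      using s by (intro mult_left_mono) auto
    then show ?thesis using eps by linarith
  qed
  have pm: "pmf (Pn m k s) w \<le> exp \<epsilon> * pmf (map_pmf sh (Pn m k s)) w" for w
  proof -
    have "w = sh (\<lambda>i. w i - d i)" unfolding sh_def by simp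
    then have "pmf (map_pmf sh (Pn m k s)) w = pmf (Pn m k s) (\<lambda>i. w i - d i)"
      using pmf_map_inj'[OF inj] by metis
    then show ?thesis using pmf_Pn_shift[OF s d0 sb] by simp
  qed
  have "measure (Mech m k s x) S = measure (measure_pmf (Pn m k s)) (outf m k x -` S)"
    by (rule Mech_measure[OF S])
  also have "\<dots> \<le> exp \<epsilon> * measure (measure_pmf (map_pmf sh (Pn m k s))) (outf m k x -` S)"
    by (rule measure_le_pmf[OF pm]) simp
  also have "measure (measure_pmf (map_pmf sh (Pn m k s))) (outf m k x -` S) = measure (Mech m k s x') S"
    unfolding Mech_measure[OF S] x' outf_shift[OF uv(3)] measure_map_pmf
    by (simp add: sh_def d_def vimage_def)
  finally show "measure (Mech m k s x) S \<le> exp \<epsilon> * measure (Mech m k s x') S" .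
qed



lemma ennreal_half: "(a::ennreal) + a = b + b \<Longrightarrow> a = b"
  by (metis add_strict_mono linorder_less_linear order_less_imp_not_eq)

definition Rf :: "nat \<Rightarrow> (nat \<times> nat \<Rightarrow> int) \<Rightarrow> (nat \<times> nat \<Rightarrow> int)" where
  "Rf h0 z = (\<lambda>i. if fst i = h0 then - z i else z i)"

lemma Rf_inv: "Rf h0 (Rf h0 z) = z" unfolding Rf_def by auto

lemma Pn_refl:
  assumes s: "s > 0"
  shows "map_pmf (Rf h0) (Pn m k s) = Pn m k s"
proof (rule pmf_eqI)
  fix w
  have inj: "inj (Rf h0)" by (metis Rf_inv injI)
  have "pmf (map_pmf (Rf h0) (Pn m k s)) w = pmf (Pn m k s) (Rf h0 w)"
    using pmf_map_inj'[OF inj, of _ "Rf h0 w"] by (simp add: Rf_inv)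
  also have "\<dots> = pmf (Pn m k s) w"
  proof -
    have c: "(\<forall>i. i \<notin> Iset m k \<longrightarrow> Rf h0 w i = 0) = (\<forall>i. i \<notin> Iset m k \<longrightarrow> w i = 0)"
      unfolding Rf_def by auto
    have p: "pmf (Gn s) (Rf h0 w i) = pmf (Gn s) (w i)" for i
      unfolding pmf_Gn[OF s] Rf_def by simp
    show ?thesis unfolding Pn_def pmf_Pi[OF finite_Iset] c p ..
  qed
  finally show "pmf (map_pmf (Rf h0) (Pn m k s)) w = pmf (Pn m k s) w" .
qed

lemma refl_sum:
  fixes P :: "(nat \<times> nat \<Rightarrow> int) pmf" and W :: "nat \<Rightarrow> (nat \<times> nat \<Rightarrow> int) \<Rightarrow> real"
  assumes inv: "\<And>h0. map_pmf (Rf h0) P = P"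
    and W: "\<And>h h0 z. W h (Rf h0 z) = (if h = h0 then - W h z else W h z)"
    and H: "finite H"
  shows "(\<integral>\<^sup>+z. ennreal ((\<Sum>h\<in>H. W h z)^2) \<partial>P) = (\<Sum>h\<in>H. \<integral>\<^sup>+z. ennreal ((W h z)^2) \<partial>P)"
  using H
proof (induction H rule: finite_induct)
  case empty
  then show ?case by simp
next
  case (insert h0 H)
  define S where "S z = (\<Sum>h\<in>H. W h z)" for z
  have SR: "S (Rf h0 z) = S z" for z
    unfolding S_def using insert(2) by (intro sum.cong) (auto simp: W)
  have WR: "W h0 (Rf h0 z) = - W h0 z" for z by (simp add: W)
  define X where "X = (\<integral>\<^sup>+z. ennreal ((W h0 z + S z)^2) \<partial>P)"
  have X2: "X = (\<integral>\<^sup>+z. ennreal ((- W h0 z + S z)^2) \<partial>P)"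
  proof -
    have "X = (\<integral>\<^sup>+z. ennreal ((W h0 z + S z)^2) \<partial>map_pmf (Rf h0) P)"
      unfolding X_def inv ..
    also have "\<dots> = (\<integral>\<^sup>+z. ennreal ((- W h0 z + S z)^2) \<partial>P)"
      unfolding nn_integral_map_pmf SR WR ..
    finally show ?thesis .
  qed
  have "X + X = (\<integral>\<^sup>+z. ennreal ((W h0 z + S z)^2) + ennreal ((- W h0 z + S z)^2) \<partial>P)"
    unfolding X_def by (subst (2) X2[unfolded X_def], rule nn_integral_add[symmetric]) auto
  also have "\<dots> = (\<integral>\<^sup>+z. (ennreal ((W h0 z)^2) + ennreal ((S z)^2)) + (ennreal ((W h0 z)^2) + ennreal ((S z)^2)) \<partial>P)"
  proof (rule nn_integral_cong)
    fix z
    have "(W h0 z + S z)^2 + (- W h0 z + S z)^2 = ((W h0 z)^2 + (S z)^2) + ((W h0 z)^2 + (S z)^2)"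
      by (simp add: power2_eq_square algebra_simps)
    then show "ennreal ((W h0 z + S z)^2) + ennreal ((- W h0 z + S z)^2) = (ennreal ((W h0 z)^2) + ennreal ((S z)^2)) + (ennreal ((W h0 z)^2) + ennreal ((S z)^2))"
      by (simp add: ennreal_plus[symmetric] del: ennreal_plus)
  qed
  also have "\<dots> = ((\<integral>\<^sup>+z. ennreal ((W h0 z)^2) \<partial>P) + (\<integral>\<^sup>+z. ennreal ((S z)^2) \<partial>P)) + ((\<integral>\<^sup>+z. ennreal ((W h0 z)^2) \<partial>P) + (\<integral>\<^sup>+z. ennreal ((S z)^2) \<partial>P))"
    by (simp add: nn_integral_add)
  finally have "X = (\<integral>\<^sup>+z. ennreal ((W h0 z)^2) \<partial>P) + (\<integral>\<^sup>+z. ennreal ((S z)^2) \<partial>P)"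
    by (rule ennreal_half)
  then show ?case
    using insert by (simp add: X_def S_def)
qed

lemma marg:
  assumes "i \<in> Iset m k"
  shows "(\<integral>\<^sup>+z. f (z i) \<partial>Pn m k s) = (\<integral>\<^sup>+t. f t \<partial>Gn s)"
proof -
  have "(\<integral>\<^sup>+z. f (z i) \<partial>Pn m k s) = (\<integral>\<^sup>+t. f t \<partial>map_pmf (\<lambda>z. z i) (Pn m k s))"
    by simp
  also have "map_pmf (\<lambda>z. z i) (Pn m k s) = Gn s"
    unfolding Pn_def using assms by (simp add: Pi_pmf_component[OF finite_Iset])
  finally show ?thesis .
qed

lemma diff_sq_bound:
  assumes s: "s > 0" and i: "i \<in> Iset m k" and j: "j \<in> Iset m k"
  shows "(\<integral>\<^sup>+z. ennreal ((real_of_int (z i) - real_of_int (z j))^2) \<partial>Pn m k s) \<le> ennreal (256/s^2)"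
proof -
  have "(\<integral>\<^sup>+z. ennreal ((real_of_int (z i) - real_of_int (z j))^2) \<partial>Pn m k s)
     \<le> (\<integral>\<^sup>+z. ennreal 2 * ennreal ((real_of_int (z i))^2) + ennreal 2 * ennreal ((real_of_int (z j))^2) \<partial>Pn m k s)"
  proof (rule nn_integral_mono)
    fix z
    have "(real_of_int (z i) - real_of_int (z j))^2 \<le> 2 * (real_of_int (z i))^2 + 2 * (real_of_int (z j))^2"
    proof -
      have "(real_of_int (z i) - real_of_int (z j))^2 + (real_of_int (z i) + real_of_int (z j))^2 = 2 * (real_of_int (z i))^2 + 2 * (real_of_int (z j))^2"
        by (simp add: power2_eq_square algebra_simps)
      moreover have "0 \<le> (real_of_int (z i) + real_of_int (z j))^2" by simp
      ultimately show ?thesis by linarith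
    qed
    then show "ennreal ((real_of_int (z i) - real_of_int (z j))^2) \<le> ennreal 2 * ennreal ((real_of_int (z i))^2) + ennreal 2 * ennreal ((real_of_int (z j))^2)"
    proof -
      assume h: "(real_of_int (z i) - real_of_int (z j))^2 \<le> 2 * (real_of_int (z i))^2 + 2 * (real_of_int (z j))^2"
      have "ennreal (2 * (real_of_int (z i))^2 + 2 * (real_of_int (z j))^2) = ennreal 2 * ennreal ((real_of_int (z i))^2) + ennreal 2 * ennreal ((real_of_int (z j))^2)"
        by (subst ennreal_plus) (auto simp: ennreal_mult)
      with ennreal_leI[OF h] show ?thesis by simp
    qed
  qed
  also have "\<dots> = ennreal 2 * (\<integral>\<^sup>+z. ennreal ((real_of_int (z i))^2) \<partial>Pn m k s) + ennreal 2 * (\<integral>\<^sup>+z. ennreal ((real_of_int (z j))^2) \<partial>Pn m k s)"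
    by (simp add: nn_integral_add nn_integral_cmult)
  also have "\<dots> = ennreal 2 * (\<integral>\<^sup>+t. ennreal ((real_of_int t)^2) \<partial>Gn s) + ennreal 2 * (\<integral>\<^sup>+t. ennreal ((real_of_int t)^2) \<partial>Gn s)"
    using marg[OF i, where f="\<lambda>t. ennreal ((real_of_int t)^2)"] marg[OF j, where f="\<lambda>t. ennreal ((real_of_int t)^2)"] by simp
  also have "\<dots> \<le> ennreal 2 * ennreal (64/s^2) + ennreal 2 * ennreal (64/s^2)"
    by (intro add_mono mult_left_mono Gn_moment[OF s]) auto
  also have "\<dots> = (ennreal (64/s^2) + ennreal (64/s^2)) + (ennreal (64/s^2) + ennreal (64/s^2))"
    by (simp add: mult_2)
  also have "\<dots> = ennreal (256/s^2)"
    by (simp add: ennreal_plus[symmetric] del: ennreal_plus)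
  finally show ?thesis .
qed


lemma query_err:
  assumes s: "s > 0" and q: "q \<in> range_queries k"
  shows "(\<integral>\<^sup>+y. ennreal ((range_query q x - y q)^2) \<partial>Mech m k s x) \<le> ennreal ((real m + 1) * (256/s^2))"
proof -
  obtain l r where lr: "q = (l,r)" "1 \<le> l" "l \<le> r" "r \<le> k"
    using q unfolding range_queries_def by auto
  define W where "W h z = real_of_int (z (h, r div 2^h)) - real_of_int (z (h, (l-1) div 2^h))" for h z
  have meas: "(\<lambda>y. ennreal ((range_query q x - y q)^2)) \<in> borel_measurable (output_space k)"
    unfolding output_space_def using q by measurable
  have "(\<integral>\<^sup>+y. ennreal ((range_query q x - y q)^2) \<partial>Mech m k s x)
      = (\<integral>\<^sup>+z. ennreal ((range_query q x - outf m k x z q)^2) \<partial>Pn m k s)"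
    unfolding Mech_def by (rule nn_integral_distr[OF outf_meas]) (simp add: meas)
  also have "\<dots> = (\<integral>\<^sup>+z. ennreal ((\<Sum>h\<in>{..m}. W h z)^2) \<partial>Pn m k s)"
  proof (rule nn_integral_cong)
    fix z
    have "outf m k x z q = est m x z (l,r)" unfolding outf_def using q lr by simp
    moreover have "est m x z (l,r) - range_query (l,r) x = (\<Sum>h\<in>{..m}. W h z)"
      unfolding W_def by (rule est_err[OF lr(2,3)])
    ultimately have "(range_query q x - outf m k x z q)^2 = (\<Sum>h\<in>{..m}. W h z)^2"
      using lr power2_commute[of "range_query (l,r) x" "est m x z (l,r)"] by simp
    then show "ennreal ((range_query q x - outf m k x z q)^2) = ennreal ((\<Sum>h\<in>{..m}. W h z)^2)" by simp
  qed
  also have "\<dots> = (\<Sum>h\<in>{..m}. \<integral>\<^sup>+z. ennreal ((W h z)^2) \<partial>Pn m k s)"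
    by (rule refl_sum[OF Pn_refl[OF s]]) (auto simp: W_def Rf_def)
  also have "\<dots> \<le> (\<Sum>h\<in>{..m}. ennreal (256/s^2))"
  proof (rule sum_mono)
    fix h assume h: "h \<in> {..m}"
    have i1: "(h, r div 2^h) \<in> Iset m k" using h lr by (auto simp: Iset_def intro: le_trans[OF div_le_dividend])
    have i2: "(h, (l-1) div 2^h) \<in> Iset m k" using h lr by (auto simp: Iset_def intro: le_trans[OF div_le_dividend])
    show "(\<integral>\<^sup>+z. ennreal ((W h z)^2) \<partial>Pn m k s) \<le> ennreal (256/s^2)"
      unfolding W_def by (rule diff_sq_bound[OF s i1 i2])
  qed
  also have "\<dots> = of_nat (Suc m) * ennreal (256/s^2)" by simp
  also have "\<dots> = ennreal (real (Suc m)) * ennreal (256/s^2)"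
    by (simp only: ennreal_of_nat_eq_real_of_nat)
  also have "\<dots> = ennreal (real (Suc m) * (256/s^2))"
    by (rule ennreal_mult[symmetric]) auto
  also have "real (Suc m) = real m + 1" by simp
  finally show ?thesis .
qed

lemma ln2_ge: "1/2 \<le> ln (2::real)"
proof -
  have "exp (1/2::real) * exp (1/2) = exp 1" by (simp add: exp_add[symmetric])
  also have "\<dots> \<le> 3" by (rule exp_le)
  finally have three: "exp (1/2::real) * exp (1/2) \<le> 3" .
  have "exp (1/2::real) < 2"
  proof (rule ccontr)
    assume "\<not> exp (1/2::real) < 2"
    then have "2 \<le> exp (1/2::real)" by simp
    then have "2 * 2 \<le> exp (1/2::real) * exp (1/2)" by (intro mult_mono) auto
    then show False using three by simp
  qed
  then show ?thesis by (metis exp_gt_zero exp_ln less_eq_real_def ln_less_cancel_iff zero_less_numeral ln_exp)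
qed

theorem theorem5p5:
  shows "\<exists>C>0. \<forall>(k::nat) (\<theta>::nat) (\<epsilon>::real). k \<ge> 1 \<longrightarrow> \<theta> \<ge> 1 \<longrightarrow> \<epsilon> > 0 \<longrightarrow>
           (\<exists>M. blowfish_private \<epsilon> \<theta> k M \<and>
                error_per_query k M \<le> ennreal (C * (1 + ln (real \<theta>)) ^ 3 / \<epsilon>\<^sup>2))"
proof (intro exI[of _ "8192::real"] conjI allI impI)
  fix k \<theta> :: nat and \<epsilon> :: real
  assume k: "k \<ge> 1" and th: "\<theta> \<ge> 1" and e: "\<epsilon> > 0"
  define m where "m = (LEAST m. \<theta> < 2^m)"
  have ex: "\<theta> < 2^\<theta>" by (rule less_exp)
  have m1: "\<theta> < 2^m" unfolding m_def by (rule LeastI[of _ \<theta>]) (rule ex)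
  have m0: "m \<ge> 1" using m1 th by (cases m) auto
  have m2: "2^(m-1) \<le> \<theta>"
  proof -
    have "\<not> \<theta> < 2^(m-1)" unfolding m_def by (rule not_less_Least) (use m0 in \<open>simp add: m_def\<close>)
    then show ?thesis by simp
  qed
  define s where "s = \<epsilon> / (2 * (real m + 1))"
  have s: "s > 0" using e by (simp add: s_def)
  have se: "s * (2 * (real m + 1)) \<le> \<epsilon>" unfolding s_def by simp
  define B where "B = ennreal ((real m + 1) * (256/s^2))"
  show "\<exists>M. blowfish_private \<epsilon> \<theta> k M \<and> error_per_query k M \<le> ennreal (8192 * (1 + ln (real \<theta>)) ^ 3 / \<epsilon>\<^sup>2)"
  proof (intro exI conjI)
    show "blowfish_private \<epsilon> \<theta> k (Mech m k s)" by (rule privacy[OF s m1 se])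
    have fin: "finite (range_queries k)"
      by (rule finite_subset[of _ "{1..k} \<times> {1..k}"]) (auto simp: range_queries_def)
    have cpos: "card (range_queries k) > 0"
      using fin k by (auto simp: card_gt_0_iff range_queries_def intro!: exI[of _ "(1,1)"])
    have "(SUP x\<in>databases k. \<Sum>q\<in>range_queries k. \<integral>\<^sup>+ y. ennreal ((range_query q x - y q)\<^sup>2) \<partial>(Mech m k s x))
        \<le> of_nat (card (range_queries k)) * B"
    proof (rule SUP_least)
      fix x
      have "(\<Sum>q\<in>range_queries k. \<integral>\<^sup>+ y. ennreal ((range_query q x - y q)\<^sup>2) \<partial>(Mech m k s x)) \<le> (\<Sum>q\<in>range_queries k. B)"
        unfolding B_def by (rule sum_mono) (rule query_err[OF s])
      then show "(\<Sum>q\<in>range_queries k. \<integral>\<^sup>+ y. ennreal ((range_query q x - y q)\<^sup>2) \<partial>(Mech m k s x)) \<le> of_nat (card (range_queries k)) * B"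
        by simp
    qed
    then have "error_per_query k (Mech m k s) \<le> of_nat (card (range_queries k)) * B / of_nat (card (range_queries k))"
      unfolding error_per_query_def by (rule divide_right_mono_ennreal)
    also have "\<dots> = B"
      using cpos by (subst mult.commute, intro mult_divide_eq_ennreal) auto
    also have "B \<le> ennreal (8192 * (1 + ln (real \<theta>)) ^ 3 / \<epsilon>\<^sup>2)"
    proof -
      have "real (2^(m-1)) \<le> real \<theta>" using m2 by linarith
      then have "ln (real (2^(m-1))) \<le> ln (real \<theta>)" using th by (subst ln_le_cancel_iff) auto
      then have "real (m-1) * ln 2 \<le> ln (real \<theta>)" by (simp add: ln_realpow)
      moreover have "real (m-1) * (1/2) \<le> real (m-1) * ln 2" by (intro mult_left_mono ln2_ge) auto
      ultimately have "real m + 1 \<le> 2 * (1 + ln (real \<theta>))" using m0 by (simp add: of_nat_diff)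
      moreover have "0 \<le> real m + 1" by simp
      ultimately have c: "(real m + 1)^3 \<le> (2 * (1 + ln (real \<theta>)))^3" by (rule power_mono)
      have "(real m + 1) * (256/s^2) = 1024 * (real m + 1)^3 / \<epsilon>^2"
        unfolding s_def using e by (simp add: field_simps power2_eq_square power3_eq_cube)
      also have "\<dots> \<le> 1024 * (2 * (1 + ln (real \<theta>)))^3 / \<epsilon>^2"
        using c e by (intro divide_right_mono mult_left_mono) auto
      also have "\<dots> = 8192 * (1 + ln (real \<theta>)) ^ 3 / \<epsilon>\<^sup>2"
      proof -
        have "(2 * (1 + ln (real \<theta>)))^3 = 8 * (1 + ln (real \<theta>))^3"
          by (subst power_mult_distrib) simp
        then show ?thesis by simp
      qed
      finally show ?thesis unfolding B_def by (rule ennreal_leI)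
    qed
    finally show "error_per_query k (Mech m k s) \<le> ennreal (8192 * (1 + ln (real \<theta>)) ^ 3 / \<epsilon>\<^sup>2)" .
  qed
qed simp


end
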